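(* Let $r,m\in\mathbb{N}$ and let $G$ be a graph with $\mathrm{scol}_r(G)=m$. Then every vertex of $G$ has finite $(r,m-1)$-rank.
   Context: Strong coloring numbers (with the following orientation convention): for a linear order $\le$ on $V(G)$, a vertex $w$ is strongly $r$-reachable from $v$ if $w\ge v$ and there is a path from $v$ to $w$ of length at most $r$ all of whose vertices other than $v$ and $w$ are smaller than $v$. $\mathrm{scol}_r(G)$ is the minimum over all linear orders of $V(G)$ of the maximum, over vertices $v$, of the number of vertices strongly $r$-reachable from $v$. $N_r^G(v)$ is the closed $r$-neighborhood of $v$; $G-S$ is the subgraph induced on $V(G)\setminus S$. The $(r,m)$-rank of vertices of $G$ (values in $\mathbb{N}\cup\{\infty\}$) is defined by: initially every vertex has rank $\infty$; in rounds $i=1,2,\dots$, every vertex $v$ currently of rank $\infty$ receives rank $i$ if there exists $S\subseteq V(G)\setminus\{v\}$ with $|S|\le m$ such that every vertex of $N_r^{G-S}(v)\setminus\{v\}$ received a finite rank in rounds $1,\dots,i-1$; the procedure stops when all ranks are finite or a round assigns no new rank. *)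

theory Defs
  imports Main
begin

definition fin_graph :: "'a set \<Rightarrow> ('a \<Rightarrow> 'a \<Rightarrow> bool) \<Rightarrow> bool" where
  "fin_graph V E \<longleftrightarrow> finite V \<and> (\<forall>x y. E x y \<longrightarrow> x \<in> V \<and> y \<in> V)
     \<and> (\<forall>x y. E x y \<longrightarrow> E y x) \<and> (\<forall>x. \<not> E x x)"

text \<open>A path in the graph with vertex set V (vertex list, length of path = length ps - 1).\<close>
definition is_path :: "'a set \<Rightarrow> ('a \<Rightarrow> 'a \<Rightarrow> bool) \<Rightarrow> 'a list \<Rightarrow> bool" where
  "is_path V E ps \<longleftrightarrow> ps \<noteq> [] \<and> distinct ps \<and> set ps \<subseteq> V
     \<and> (\<forall>i < length ps - 1. E (ps ! i) (ps ! Suc i))"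

text \<open>Vertices strongly r-reachable from v w.r.t. the linear order L (a set of pairs, (x,y) \<in> L meaning x \<le> y).\<close>
definition sreach :: "'a set \<Rightarrow> ('a \<Rightarrow> 'a \<Rightarrow> bool) \<Rightarrow> 'a rel \<Rightarrow> nat \<Rightarrow> 'a \<Rightarrow> 'a set" where
  "sreach V E L r v = {w \<in> V. (v, w) \<in> L \<and>
     (\<exists>ps. is_path V E ps \<and> hd ps = v \<and> last ps = w \<and> length ps \<le> r + 1
        \<and> (\<forall>u \<in> set (butlast (tl ps)). (u, v) \<in> L \<and> u \<noteq> v))}"

definition scol :: "nat \<Rightarrow> 'a set \<Rightarrow> ('a \<Rightarrow> 'a \<Rightarrow> bool) \<Rightarrow> nat" where
  "scol r V E = (LEAST k. \<exists>L. linear_order_on V L \<and> (\<forall>v \<in> V. card (sreach V E L r v) \<le> k))"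

definition nbhd_minus :: "'a set \<Rightarrow> ('a \<Rightarrow> 'a \<Rightarrow> bool) \<Rightarrow> 'a set \<Rightarrow> nat \<Rightarrow> 'a \<Rightarrow> 'a set" where
  "nbhd_minus V E S r v = {u \<in> V - S. \<exists>ps. is_path (V - S) E ps \<and> hd ps = v \<and> last ps = u
      \<and> length ps \<le> r + 1}"

text \<open>ranked V E r m i: the set of vertices that received a rank in rounds 1..i.\<close>
fun ranked :: "'a set \<Rightarrow> ('a \<Rightarrow> 'a \<Rightarrow> bool) \<Rightarrow> nat \<Rightarrow> nat \<Rightarrow> nat \<Rightarrow> 'a set" where
  "ranked V E r m 0 = {}"
| "ranked V E r m (Suc i) = ranked V E r m i \<union>
     {v \<in> V. \<exists>S. S \<subseteq> V - {v} \<and> card S \<le> m \<and> nbhd_minus V E S r v - {v} \<subseteq> ranked V E r m i}"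

definition finite_rank :: "'a set \<Rightarrow> ('a \<Rightarrow> 'a \<Rightarrow> bool) \<Rightarrow> nat \<Rightarrow> nat \<Rightarrow> 'a \<Rightarrow> bool" where
  "finite_rank V E r m v \<longleftrightarrow> (\<exists>i. v \<in> ranked V E r m i)"

end

theory Submission
  imports Defs
begin

lemma take_path_aux: "ps \<noteq> [] \<Longrightarrow> distinct ps \<Longrightarrow> set ps \<subseteq> V - S \<Longrightarrow> \<forall>k < length ps - 1. E (ps ! k) (ps ! Suc k) \<Longrightarrow> i < length ps \<Longrightarrow>
  take (Suc i) ps \<noteq> [] \<and> distinct (take (Suc i) ps) \<and> set (take (Suc i) ps) \<subseteq> V
     \<and> (\<forall>k < length (take (Suc i) ps) - 1. E (take (Suc i) ps ! k) (take (Suc i) ps ! Suc k))"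
  apply (intro conjI)
  subgoal by (cases ps) auto
  subgoal by simp
  subgoal by (meson Diff_subset order_trans set_take_subset) 
  subgoal proof (intro allI impI)
    fix k assume "i < length ps" "\<forall>k < length ps - 1. E (ps ! k) (ps ! Suc k)" "k < length (take (Suc i) ps) - 1"
    then show "E (take (Suc i) ps ! k) (take (Suc i) ps ! Suc k)" by auto
  qed
  done

lemma bt: "x \<in> set (butlast (tl (take (Suc i) ps))) \<Longrightarrow> i < length ps \<Longrightarrow> \<exists>j. 0 < j \<and> j < i \<and> x = ps ! j"
  proof -
  assume a: "x \<in> set (butlast (tl (take (Suc i) ps)))" and b: "i < length ps"
  then obtain k where "k < i - 1" "x = ps ! Suc k" by (auto simp: in_set_conv_nth nth_butlast nth_tl)
  then show ?thesis by (intro exI[of _ "Suc k"]) auto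
qed

lemma path_below:
  assumes lin: "linear_order_on V L"
    and p: "is_path (V - S) E ps" and hd: "hd ps = v" and len: "length ps \<le> r + 1"
    and S: "sreach V E L r v - {v} \<subseteq> S"
  shows "\<forall>i. 0 < i \<longrightarrow> i < length ps \<longrightarrow> (ps ! i, v) \<in> L \<and> ps ! i \<noteq> v"
proof (intro allI)
  fix i show "0 < i \<longrightarrow> i < length ps \<longrightarrow> (ps ! i, v) \<in> L \<and> ps ! i \<noteq> v"
  proof (induction i rule: less_induct)
    case (less i)
    show ?case
    proof (intro impI)
      assume i0: "0 < i" and il: "i < length ps"
      have ne: "ps \<noteq> []" and dist: "distinct ps" and sub: "set ps \<subseteq> V - S"
        and ed: "\<forall>k < length ps - 1. E (ps ! k) (ps ! Suc k)"
        using p unfolding is_path_def by auto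
      have v0: "ps ! 0 = v" using hd ne by (simp add: hd_conv_nth)
      have neq: "ps ! i \<noteq> v"
      proof
        assume "ps ! i = v"
        then have "ps ! i = ps ! 0" using v0 by simp
        moreover have "0 < length ps" using il by (rule le_less_trans[OF le0])
        ultimately have "i = 0" using nth_eq_iff_index_eq[OF dist il, of 0] by blast
        then show False using i0 by simp
      qed
      have m1: "ps ! i \<in> set ps" using il by (rule nth_mem)
      have m2: "v \<in> set ps" using hd_in_set[OF ne] hd by simp
      have inV: "ps ! i \<in> V" "v \<in> V" using sub m1 m2 by blast+
      have notS: "ps ! i \<notin> S" using sub m1 by blast
      show "(ps ! i, v) \<in> L \<and> ps ! i \<noteq> v"
      proof (rule ccontr)
        assume "\<not> ?thesis"
        then have "(ps ! i, v) \<notin> L" using neq by auto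
        moreover have "total_on V L" using lin unfolding linear_order_on_def by (rule conjunct2)
        ultimately have vi: "(v, ps ! i) \<in> L" using inV neq unfolding total_on_def by metis
        define qs where "qs = take (Suc i) ps"
        have qp: "is_path V E qs" unfolding qs_def is_path_def
          using take_path_aux[OF ne dist sub ed il] .
        have qh: "hd qs = v" using hd ne unfolding qs_def by (cases ps) auto
        have ql: "last qs = ps ! i" unfolding qs_def using il
        proof -
          have "length (take (Suc i) ps) = Suc i" using il by simp
          moreover have "take (Suc i) ps \<noteq> []" using il by (cases ps) auto
          ultimately have "last (take (Suc i) ps) = take (Suc i) ps ! i" by (metis diff_Suc_1 last_conv_nth)
          then show "last (take (Suc i) ps) = ps ! i" by simp
        qed
        have qlen: "length qs \<le> r + 1" unfolding qs_def using len by simp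
        have qb: "\<forall>u \<in> set (butlast (tl qs)). (u, v) \<in> L \<and> u \<noteq> v"
        proof
          fix u assume "u \<in> set (butlast (tl qs))"
          then have "u \<in> set (butlast (tl (take (Suc i) ps)))" unfolding qs_def .
          from bt[OF this il] obtain j where "0 < j" "j < i" "u = ps ! j" by blast
          then show "(u, v) \<in> L \<and> u \<noteq> v" using less.IH il by auto
        qed
        have "ps ! i \<in> sreach V E L r v" unfolding sreach_def
          using inV vi qp qh ql qlen qb by blast
        then show False using S neq notS by blast
      qed
    qed
  qed
qed

theorem lemma3p6:
  fixes V :: "'a set" and E :: "'a \<Rightarrow> 'a \<Rightarrow> bool" and r m :: nat
  assumes "fin_graph V E"
    and "scol r V E = m"
  shows "\<forall>v \<in> V. finite_rank V E r (m - 1) v"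
proof -
  have fin: "finite V" using assms(1) unfolding fin_graph_def by auto
  obtain W where "well_order_on V W" using well_order_on by blast
  then have lW: "linear_order_on V W" unfolding well_order_on_def by blast
  have ex: "\<exists>k L. linear_order_on V L \<and> (\<forall>v \<in> V. card (sreach V E L r v) \<le> k)"
  proof (intro exI conjI)
    show "linear_order_on V W" by fact
    show "\<forall>v\<in>V. card (sreach V E W r v) \<le> card V"
      using fin by (auto intro: card_mono simp: sreach_def)
  qed
  obtain L where lin: "linear_order_on V L" and bd: "\<forall>v \<in> V. card (sreach V E L r v) \<le> m"
    using LeastI_ex[OF ex] assms(2) unfolding scol_def by blast
  have LV: "L \<subseteq> V \<times> V" and refl: "\<forall>v\<in>V. (v,v) \<in> L"
    using lin unfolding linear_order_on_def partial_order_on_def preorder_on_def refl_on_def by auto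
  have antis: "antisym L" using lin unfolding linear_order_on_def partial_order_on_def by auto
  have tr: "trans L" using lin unfolding linear_order_on_def partial_order_on_def preorder_on_def by auto
  define below where "below v = {u \<in> V. (u, v) \<in> L \<and> u \<noteq> v}" for v
  have key: "\<forall>v\<in>V. card (below v) < n \<longrightarrow> v \<in> ranked V E r (m - 1) n" for n
  proof (induction n)
    case 0 then show ?case by simp
  next
    case (Suc n)
    show ?case
    proof (intro ballI impI)
      fix v assume vV: "v \<in> V" and cv: "card (below v) < Suc n"
      define S where "S = sreach V E L r v - {v}"
      have SV: "S \<subseteq> V - {v}" unfolding S_def sreach_def by auto
      have fs: "finite (sreach V E L r v)" using fin by (auto intro: finite_subset simp: sreach_def)
      have cS: "card S \<le> m - 1"
      proof -
        have "v \<in> sreach V E L r v" unfolding sreach_def using vV refl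
          by (auto intro!: exI[of _ "[v]"] simp: is_path_def)
        then have "card S = card (sreach V E L r v) - 1" unfolding S_def using fs by simp
        then show ?thesis using bd vV by (metis diff_le_mono)
      qed
      have "nbhd_minus V E S r v - {v} \<subseteq> ranked V E r (m - 1) n"
      proof
        fix u assume "u \<in> nbhd_minus V E S r v - {v}"
        then obtain ps where uV: "u \<in> V" and uv: "u \<noteq> v" and p: "is_path (V - S) E ps"
          and h: "hd ps = v" and l: "last ps = u" and len: "length ps \<le> r + 1"
          unfolding nbhd_minus_def by auto
        have ne: "ps \<noteq> []" using p unfolding is_path_def by auto
        have "length ps - 1 > 0"
        proof (rule ccontr)
          assume "\<not> ?thesis"
          then have "length ps = 1" using ne by (cases ps) auto
          then show False using h l uv by (cases ps) auto
        qed
        then have "(u, v) \<in> L \<and> u \<noteq> v"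
          proof -
          have "\<forall>i>0. i < length ps \<longrightarrow> (ps ! i, v) \<in> L \<and> ps ! i \<noteq> v"
            using path_below[OF lin p h len] unfolding S_def by blast
          moreover have "u = ps ! (length ps - 1)" using l ne by (metis diff_Suc_1 last_conv_nth)
          ultimately show ?thesis using \<open>length ps - 1 > 0\<close> by auto
        qed
        then have ub: "u \<in> below v" using uV unfolding below_def by auto
        have "below u \<subset> below v"
        proof
          show "below u \<subseteq> below v" unfolding below_def using ub tr antis
            unfolding below_def trans_def antisym_def by blast
          show "below u \<noteq> below v" using ub unfolding below_def by auto
        qed
        then have "card (below u) < card (below v)"
          using fin by (intro psubset_card_mono) (auto simp: below_def)
        then show "u \<in> ranked V E r (m - 1) n" using Suc.IH uV cv by auto
      qed
      then show "v \<in> ranked V E r (m - 1) (Suc n)" using vV SV cS by auto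
    qed
  qed
  show ?thesis
  proof
    fix v assume vV: "v \<in> V"
    have "card (below v) \<le> card V" using fin by (intro card_mono) (auto simp: below_def)
    then have "card (below v) < Suc (card V)" by simp
    then have "v \<in> ranked V E r (m - 1) (Suc (card V))" using key[of "Suc (card V)"] vV by blast
    then show "finite_rank V E r (m - 1) v" unfolding finite_rank_def by blast
  qed
qed

end
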